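(* Let $c > 0$, $\rho > 0$, and $\mathbf{d}\in\mathbb{R}^n$ with $\eta := \|\mathbf{d}\|_2 > 0$. Set $D = \dfrac{c}{\rho\,\eta^3}$. Then the polynomial $F(\tau) = \tau^3 - \tau^2 - D$ has exactly one real root, given by $$\tau^* = \frac13 + \frac13\left(C + \frac1C\right), \qquad C = \sqrt[3]{\frac{27D + 2 + \sqrt{(27D+2)^2 - 4}}{2}},$$ and $\tau^*>0$. Moreover, the problem $$\min_{\mathbf{y}\in\mathbb{R}^n\setminus\{\mathbf{0}\}} \ \frac{c}{\|\mathbf{y}\|_2} + \frac{\rho}{2}\|\mathbf{y}-\mathbf{d}\|_2^2$$ has the unique minimizer $\mathbf{y} = \tau^*\mathbf{d}$.
   Context: $\sqrt[3]{\cdot}$ denotes the real cube root. *)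

theory Defs
  imports "HOL-Analysis.Analysis"
begin

end

theory Submission imports Defs begin

lemma norm_decomp:
  fixes z d :: "'a::real_inner"
  assumes "z \<noteq> 0" "norm d > 0"
  shows "(norm (z - d))\<^sup>2 = (norm z - norm d)\<^sup>2
          + (norm d / norm z) * (norm (z - (norm z / norm d) *\<^sub>R d))\<^sup>2"
proof -
  define r where "r = norm z"
  define e where "e = norm d"
  have r: "r > 0" using assms r_def by simp
  have e: "e > 0" using assms e_def by simp
  have rr: "inner z z = r^2" by (simp add: r_def power2_norm_eq_inner)
  have ee: "inner d d = e^2" by (simp add: e_def power2_norm_eq_inner)
  have 1: "(norm (z - d))\<^sup>2 = r^2 - 2 * inner z d + e^2"
    by (simp add: power2_norm_eq_inner inner_diff_left inner_diff_right rr ee inner_commute)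
  have 2: "(norm (z - (r/e) *\<^sub>R d))\<^sup>2 = r^2 - 2 * (r/e) * inner z d + (r/e)^2 * e^2"
  proof -
    have "(norm (z - (r/e) *\<^sub>R d))\<^sup>2 = inner (z - (r/e) *\<^sub>R d) (z - (r/e) *\<^sub>R d)"
      by (simp add: power2_norm_eq_inner)
    also have "\<dots> = inner z z - 2 * (r/e) * inner z d + (r/e)^2 * inner d d"
      by (simp add: inner_diff_left inner_diff_right inner_commute power2_eq_square algebra_simps)
    finally show ?thesis by (simp add: rr ee)
  qed
  show ?thesis unfolding r_def[symmetric] e_def[symmetric] 1 2
    using r e by (simp add: field_simps power2_eq_square)
qed

lemma scalar_min:
  fixes t \<tau> D :: real
  assumes "t > 0" "\<tau> > 1" "\<tau>^3 - \<tau>^2 = D"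
  shows "D/t + (t-1)^2/2 - (D/\<tau> + (\<tau>-1)^2/2) = (t-\<tau>)^2 * (t + 2*\<tau> - 2) / (2*t)"
  using assms by (simp add: field_simps power2_eq_square power3_eq_cube) algebra

lemma fz_alg:
  fixes c D \<rho> \<eta> r Q :: real
  assumes "r > 0" "\<eta> > 0" "c = D * \<rho> * \<eta>^3"
  shows "c / r + \<rho> / 2 * ((r - \<eta>)\<^sup>2 + (\<eta> / r) * Q)
       = \<rho> * \<eta>^2 * (D / (r / \<eta>) + (r / \<eta> - 1)^2 / 2) + \<rho> * \<eta> / (2 * r) * Q"
  using assms by (simp add: field_simps power2_eq_square power3_eq_cube)

lemma cubic_unique:
  fixes t \<tau> D :: real
  assumes "D > 0" "\<tau> > 1" "\<tau>^3 - \<tau>^2 - D = 0" "t^3 - t^2 - D = 0"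
  shows "t = \<tau>"
proof -
  have t1: "t > 1"
  proof (rule ccontr)
    assume "\<not> t > 1"
    hence "t^2 * (t - 1) \<le> 0" by (simp add: mult_nonneg_nonpos)
    thus False using assms(1,4) by (simp add: algebra_simps power2_eq_square power3_eq_cube)
  qed
  have "(t - \<tau>) * (t^2 + t*\<tau> + \<tau>^2 - t - \<tau>) = 0"
    using assms(3,4) by (simp add: algebra_simps power2_eq_square power3_eq_cube)
  moreover have "t^2 + t*\<tau> + \<tau>^2 - t - \<tau> > 0"
  proof -
    have "t^2 > t" using t1 by (simp add: power2_eq_square)
    moreover have "\<tau>^2 > \<tau>" using assms(2) by (simp add: power2_eq_square)
    moreover have "t*\<tau> > 0" using t1 assms(2) by simp
    ultimately show ?thesis by linarith
  qed
  ultimately show ?thesis by simp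
qed

theorem mainTheorem6:
  fixes c \<rho> :: real and d :: "real ^ 'n"
  assumes "c > 0" and "\<rho> > 0" and "norm d > 0"
  defines "\<eta> \<equiv> norm d"
  defines "D \<equiv> c / (\<rho> * \<eta> ^ 3)"
  defines "C \<equiv> root 3 ((27 * D + 2 + sqrt ((27 * D + 2)\<^sup>2 - 4)) / 2)"
  defines "\<tau> \<equiv> 1/3 + 1/3 * (C + 1 / C)"
  defines "f \<equiv> (\<lambda>y :: real ^ 'n. c / norm y + \<rho> / 2 * (norm (y - d))\<^sup>2)"
  shows "{t :: real. t ^ 3 - t\<^sup>2 - D = 0} = {\<tau>} \<and> \<tau> > 0 \<and>
         {y. y \<noteq> 0 \<and> (\<forall>z. z \<noteq> 0 \<longrightarrow> f y \<le> f z)} = {\<tau> *\<^sub>R d}"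
proof -
  have eta: "\<eta> > 0" using assms(3) \<eta>_def by simp
  have Dpos: "D > 0" unfolding D_def using assms(1,2) eta by simp
  define B where "B = 27 * D + 2"
  define S where "S = sqrt (B^2 - 4)"
  define A where "A = (B + S) / 2"
  have B2: "B > 2" using Dpos B_def by simp
  have B4: "B^2 \<ge> 4"
  proof -
    have "B * B \<ge> 2 * 2" using B2 by (intro mult_mono) auto
    thus ?thesis by (simp add: power2_eq_square)
  qed
  have S0: "S \<ge> 0" unfolding S_def using B4 by simp
  have S2: "S^2 = B^2 - 4" unfolding S_def using B4 by simp
  have A1: "A > 1" using B2 S0 A_def by simp
  have CA: "C = root 3 A" unfolding C_def A_def B_def S_def by simp
  have C3: "C^3 = A" unfolding CA using A1 by (simp add: odd_real_root_pow)
  have C1: "C > 1" unfolding CA using A1 by simp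
  have invA: "1 / A = (B - S) / 2"
    using A1 S2 unfolding A_def by (simp add: field_simps power2_eq_square)
  define s where "s = C + 1/C"
  have s3: "s^3 = B + 3 * s"
  proof -
    have "s^3 = C^3 + 1/C^3 + 3 * s" unfolding s_def using C1
      by (simp add: field_simps power3_eq_cube)
    also have "C^3 + 1/C^3 = B" unfolding C3 invA unfolding A_def by (simp add: field_simps)
    finally show ?thesis .
  qed
  have taus: "\<tau> = (1 + s) / 3" unfolding \<tau>_def s_def by simp
  have troot: "\<tau>^3 - \<tau>^2 - D = 0"
  proof -
    have "\<tau>^3 - \<tau>^2 = (s^3 - 3 * s - 2) / 27" unfolding taus
      by (simp add: field_simps power3_eq_cube power2_eq_square)
    also have "\<dots> = D" using s3 B_def by simp
    finally show ?thesis by simp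
  qed
  have tau1: "\<tau> > 1"
  proof -
    have "C + 1/C - 2 = (C-1)^2/C" using C1 by (simp add: field_simps power2_eq_square)
    moreover have "(C-1)^2/C > 0" using C1 by simp
    ultimately have "s > 2" unfolding s_def by linarith
    thus ?thesis unfolding taus by simp
  qed
  have part1: "{t :: real. t ^ 3 - t\<^sup>2 - D = 0} = {\<tau>}"
  proof (intro equalityI subsetI)
    fix t assume "t \<in> {t :: real. t ^ 3 - t\<^sup>2 - D = 0}"
    hence "t ^ 3 - t\<^sup>2 - D = 0" by simp
    thus "t \<in> {\<tau>}" using cubic_unique[OF Dpos tau1 troot] by simp
  next
    fix t assume "t \<in> {\<tau>}"
    thus "t \<in> {t :: real. t ^ 3 - t\<^sup>2 - D = 0}" using troot by simp
  qed
  have cD: "c = D * \<rho> * \<eta>^3" unfolding D_def using assms(2) eta by simp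
  have fz: "f z = \<rho> * \<eta>^2 * (D / (norm z / \<eta>) + (norm z / \<eta> - 1)^2 / 2)
      + \<rho> * \<eta> / (2 * norm z) * (norm (z - (norm z / \<eta>) *\<^sub>R d))\<^sup>2"
    if "z \<noteq> 0" for z
  proof -
    have nz: "norm z > 0" using that by simp
    have "f z = c / norm z + \<rho> / 2 * ((norm z - \<eta>)\<^sup>2
          + (\<eta> / norm z) * (norm (z - (norm z / \<eta>) *\<^sub>R d))\<^sup>2)"
      unfolding f_def \<eta>_def using norm_decomp[OF that assms(3)] by simp
    also have "\<dots> = \<rho> * \<eta>^2 * (D / (norm z / \<eta>) + (norm z / \<eta> - 1)^2 / 2)
      + \<rho> * \<eta> / (2 * norm z) * (norm (z - (norm z / \<eta>) *\<^sub>R d))\<^sup>2"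
      by (rule fz_alg[OF nz eta cD])
    finally show ?thesis .
  qed
  define m where "m = \<rho> * \<eta>^2 * (D / \<tau> + (\<tau> - 1)^2 / 2)"
  have ftau: "f (\<tau> *\<^sub>R d) = m"
  proof -
    have ne: "\<tau> *\<^sub>R d \<noteq> 0" using tau1 eta \<eta>_def by auto
    have n: "norm (\<tau> *\<^sub>R d) = \<tau> * \<eta>" using tau1 \<eta>_def by simp
    have "norm (\<tau> *\<^sub>R d) / \<eta> = \<tau>" unfolding n using eta by simp
    thus ?thesis using fz[OF ne] unfolding m_def by simp
  qed
  have lower: "f z \<ge> m \<and> (f z = m \<longrightarrow> z = \<tau> *\<^sub>R d)" if "z \<noteq> 0" for z
  proof -
    define t where "t = norm z / \<eta>"
    have nz: "norm z > 0" using that by simp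
    have t0: "t > 0" using nz eta t_def by simp
    define q where "q = \<rho> * \<eta> / (2 * norm z) * (norm (z - t *\<^sub>R d))\<^sup>2"
    have q0: "q \<ge> 0" unfolding q_def using assms(2) eta nz by simp
    have eq: "f z = \<rho> * \<eta>^2 * (D / t + (t - 1)^2 / 2) + q"
      using fz[OF that] unfolding t_def q_def by simp
    have sm: "D/t + (t-1)^2/2 - (D/\<tau> + (\<tau>-1)^2/2) = (t-\<tau>)^2 * (t + 2*\<tau> - 2) / (2*t)"
      using scalar_min[OF t0 tau1] troot by simp
    have g0: "(t-\<tau>)^2 * (t + 2*\<tau> - 2) / (2*t) \<ge> 0"
      using t0 tau1 by simp
    have k: "\<rho> * \<eta>^2 > 0" using assms(2) eta by simp
    have diff: "f z - m = \<rho> * \<eta>^2 * ((t-\<tau>)^2 * (t + 2*\<tau> - 2) / (2*t)) + q"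
      unfolding eq m_def sm[symmetric] by (simp add: algebra_simps)
    have kg: "\<rho> * \<eta>^2 * ((t-\<tau>)^2 * (t + 2*\<tau> - 2) / (2*t)) \<ge> 0"
      by (rule mult_nonneg_nonneg[OF less_imp_le[OF k] g0])
    have ge: "f z \<ge> m" using diff kg q0 by linarith
    moreover have "z = \<tau> *\<^sub>R d" if fe: "f z = m"
    proof -
      have a: "\<rho> * \<eta>^2 * ((t-\<tau>)^2 * (t + 2*\<tau> - 2) / (2*t)) = 0" and qz: "q = 0"
        using diff fe kg q0 by linarith+
      have "(t-\<tau>)^2 * (t + 2*\<tau> - 2) / (2*t) = 0" using a k assms(2) eta by simp
      hence tt: "t = \<tau>" using t0 tau1 by simp
      have "norm (z - t *\<^sub>R d) = 0" using qz assms(2) eta nz unfolding q_def by simp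
      thus ?thesis using tt by simp
    qed
    ultimately show ?thesis by blast
  qed
  have ne: "\<tau> *\<^sub>R d \<noteq> 0" using tau1 eta \<eta>_def by auto
  have part3: "{y. y \<noteq> 0 \<and> (\<forall>z. z \<noteq> 0 \<longrightarrow> f y \<le> f z)} = {\<tau> *\<^sub>R d}"
  proof (intro equalityI subsetI)
    fix y assume "y \<in> {y. y \<noteq> 0 \<and> (\<forall>z. z \<noteq> 0 \<longrightarrow> f y \<le> f z)}"
    hence y: "y \<noteq> 0" "f y \<le> m" using ne ftau by force+
    have "f y = m" using lower[OF y(1)] y(2) by linarith
    thus "y \<in> {\<tau> *\<^sub>R d}" using lower[OF y(1)] by simp
  next
    fix y assume "y \<in> {\<tau> *\<^sub>R d}"
    hence yy: "y = \<tau> *\<^sub>R d" by simp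
    show "y \<in> {y. y \<noteq> 0 \<and> (\<forall>z. z \<noteq> 0 \<longrightarrow> f y \<le> f z)}"
    proof -
      have "\<forall>z. z \<noteq> 0 \<longrightarrow> f y \<le> f z" using lower ftau yy by simp
      thus ?thesis using ne yy by simp
    qed
  qed
  show ?thesis using part1 part3 tau1 by simp
qed

end
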